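(* Let $V\in(\mathbb{R}\cup\{-\infty\})^{n\times p}$ have no row and no column identically equal to $-\infty$, and let $T$ be the operator $$T_i(x)=\inf_{k\in[p],\,V_{ik}\neq-\infty}\Big[-V_{ik}+\max_{j\in[n],\,j\neq i}(V_{jk}+x_j)\Big],\qquad i\in[n].$$ The following assertions are equivalent: (1) the inner radius of $\operatorname{Col}(V)$ is $+\infty$; (2) no part of $(\mathbb{R}\cup\{-\infty\})^n$ is left invariant by $T$; (3) $T^n(0)$ is the vector identically equal to $-\infty$; (4) $\rho(T)=-\infty$.
   Context: $\mathbb{R}_{\max}=\mathbb{R}\cup\{-\infty\}$, with $-\infty+c=-\infty$ and $\max\emptyset=-\infty$. $\operatorname{Col}(V)=\{Vx:x\in\mathbb{R}_{\max}^p\}$ with $(Vx)_i=\max_k(V_{ik}+x_k)$. Hilbert's projective metric: $d(x,y)=\inf\{\lambda-\mu:\lambda,\mu\in\mathbb{R},\ \mu+y_i\le x_i\le\lambda+y_i\ \forall i\}$; for $a\in\mathbb{R}^n$, $B(a,r)=\{x:d(a,x)\le r\}$. The inner radius of $\operatorname{Col}(V)$ is the supremum of the radii $r$ of balls $B(a,r)$ with $a\in\mathbb{R}^n$ included in $\operatorname{Col}(V)$. For a nonempty $I\subset[n]$, the part $P_I$ is the set of vectors of $\mathbb{R}_{\max}^n$ whose support $\{i: x_i\neq-\infty\}$ equals $I$; $P_I$ is left invariant by $T$ if $T(P_I)\subset P_I$. $T^n$ is the $n$-th iterate. $\rho(T)=\sup\{\lambda\in\mathbb{R}\cup\{-\infty\}:\exists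 u\not\equiv-\infty,\ T(u)=\lambda+u\}$. *)

theory Defs
  imports "HOL-Analysis.Analysis"
begin

text \<open>Max-plus semiring R_max = R \<union> {-\<infinity>} is modelled inside ereal; a vector of
  R_max^n is a function 'n \<Rightarrow> ereal never taking the value +\<infinity>.\<close>

definition rmax_vec :: "('a \<Rightarrow> ereal) \<Rightarrow> bool" where
  "rmax_vec x \<longleftrightarrow> (\<forall>i. x i \<noteq> \<infinity>)"

definition col :: "('n \<Rightarrow> 'p::finite \<Rightarrow> ereal) \<Rightarrow> ('n \<Rightarrow> ereal) set" where
  "col V = {(\<lambda>i. SUP k. V i k + x k) | x. rmax_vec x}"

text \<open>Hilbert's projective metric (value +\<infinity> when the defining set is empty).\<close>
definition hilbert_d :: "('n \<Rightarrow> ereal) \<Rightarrow> ('n \<Rightarrow> ereal) \<Rightarrow> ereal" where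
  "hilbert_d x y = Inf {ereal (l - m) | l m. \<forall>i. ereal m + y i \<le> x i \<and> x i \<le> ereal l + y i}"

definition hball :: "('n \<Rightarrow> real) \<Rightarrow> real \<Rightarrow> ('n \<Rightarrow> ereal) set" where
  "hball a r = {x. rmax_vec x \<and> hilbert_d (\<lambda>i. ereal (a i)) x \<le> ereal r}"

definition inner_radius :: "('n \<Rightarrow> 'p::finite \<Rightarrow> ereal) \<Rightarrow> ereal" where
  "inner_radius V = Sup {ereal r | r a. 0 \<le> r \<and> hball a r \<subseteq> col V}"

text \<open>The operator T_i(x) = inf_{k, V_ik \<noteq> -\<infinity>} [ -V_ik + max_{j \<noteq> i} (V_jk + x_j) ],
  with max of the empty set = -\<infinity>.\<close>
definition opT :: "('n \<Rightarrow> 'p \<Rightarrow> ereal) \<Rightarrow> ('n \<Rightarrow> ereal) \<Rightarrow> ('n \<Rightarrow> ereal)" where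
  "opT V x = (\<lambda>i. INF k\<in>{k. V i k \<noteq> -\<infinity>}. - V i k + (SUP j\<in>{j. j \<noteq> i}. V j k + x j))"

definition part :: "'n set \<Rightarrow> ('n \<Rightarrow> ereal) set" where
  "part I = {x. rmax_vec x \<and> {i. x i \<noteq> -\<infinity>} = I}"

definition rho :: "(('n \<Rightarrow> ereal) \<Rightarrow> ('n \<Rightarrow> ereal)) \<Rightarrow> ereal" where
  "rho T = Sup {c. c \<noteq> \<infinity> \<and> (\<exists>u. rmax_vec u \<and> u \<noteq> (\<lambda>_. -\<infinity>) \<and> T u = (\<lambda>i. c + u i))}"

end

theory Submission
  imports Defs
begin


lemma INF_attained:
  fixes f :: "'a \<Rightarrow> 'b::complete_linorder"
  assumes "finite A" "A \<noteq> {}" shows "\<exists>a\<in>A. (INF x\<in>A. f x) = f a"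
proof -
  have "(INF x\<in>A. f x) = Min (f ` A)" using Min_Inf[of "f`A"] assms by simp
  moreover have "Min (f ` A) \<in> f ` A" using assms by (intro Min_in) auto
  ultimately show ?thesis by auto
qed

lemma SUP_attained:
  fixes f :: "'a \<Rightarrow> 'b::complete_linorder"
  assumes "finite A" "A \<noteq> {}" shows "\<exists>a\<in>A. (SUP x\<in>A. f x) = f a"
proof -
  have "(SUP x\<in>A. f x) = Max (f ` A)" using Max_Sup[of "f`A"] assms by simp
  moreover have "Max (f ` A) \<in> f ` A" using assms by (intro Max_in) auto
  ultimately show ?thesis by auto
qed

definition Fs :: "('n \<Rightarrow> 'p \<Rightarrow> ereal) \<Rightarrow> 'n set \<Rightarrow> 'n set" where
  "Fs V S = {i. \<forall>k. V i k \<noteq> -\<infinity> \<longrightarrow> (\<exists>j. j \<noteq> i \<and> j \<in> S \<and> V j k \<noteq> -\<infinity>)}"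

lemma Fs_mono: "S \<subseteq> S' \<Longrightarrow> Fs V S \<subseteq> Fs V S'"
  unfolding Fs_def by blast

lemma opT_not_inf:
  fixes V :: "'n::finite \<Rightarrow> 'p::finite \<Rightarrow> ereal"
  assumes hV: "\<forall>i k. V i k \<noteq> \<infinity>" and hrow: "\<forall>i. \<exists>k. V i k \<noteq> -\<infinity>"
    and x: "rmax_vec x"
  shows "opT V x i \<noteq> \<infinity>"
proof -
  obtain k where k: "V i k \<noteq> -\<infinity>" using hrow by auto
  obtain v where v: "V i k = ereal v" using k hV by (cases "V i k") auto
  have "(SUP j\<in>{j. j \<noteq> i}. V j k + x j) \<le> (SUP j\<in>{j. j \<noteq> i}. V j k + x j)" by simp
  have s: "(SUP j\<in>{j. j \<noteq> i}. V j k + x j) \<noteq> \<infinity>"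
  proof (cases "{j. j \<noteq> i} = {}")
    case True then show ?thesis by (simp add: bot_ereal_def)
  next
    case False
    then obtain j where "(SUP j\<in>{j. j \<noteq> i}. V j k + x j) = V j k + x j"
      using SUP_attained[of "{j. j \<noteq> i}" "\<lambda>j. V j k + x j"] by auto
    moreover have "V j k + x j \<noteq> \<infinity>" using hV x unfolding rmax_vec_def by simp
    ultimately show ?thesis by simp
  qed
  have "opT V x i \<le> - V i k + (SUP j\<in>{j. j \<noteq> i}. V j k + x j)"
    unfolding opT_def using k by (auto intro: INF_lower)
  moreover have "- V i k + (SUP j\<in>{j. j \<noteq> i}. V j k + x j) \<noteq> \<infinity>" using v s by simp
  ultimately show ?thesis by (metis ereal_infty_less(1) order.not_eq_order_implies_strict top_greatest top_ereal_def dual_order.strict_trans2)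
qed

lemma opT_rmax:
  fixes V :: "'n::finite \<Rightarrow> 'p::finite \<Rightarrow> ereal"
  assumes hV: "\<forall>i k. V i k \<noteq> \<infinity>" and hrow: "\<forall>i. \<exists>k. V i k \<noteq> -\<infinity>"
    and x: "rmax_vec x"
  shows "rmax_vec (opT V x)"
  using opT_not_inf[OF assms] unfolding rmax_vec_def by blast

lemma opT_minf_iff:
  fixes V :: "'n::finite \<Rightarrow> 'p::finite \<Rightarrow> ereal"
  assumes hV: "\<forall>i k. V i k \<noteq> \<infinity>" and hrow: "\<forall>i. \<exists>k. V i k \<noteq> -\<infinity>"
    and x: "rmax_vec x"
  shows "opT V x i = -\<infinity> \<longleftrightarrow> i \<notin> Fs V {j. x j \<noteq> -\<infinity>}"
proof
  assume h: "opT V x i = -\<infinity>"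
  have ne: "{k. V i k \<noteq> -\<infinity>} \<noteq> {}" using hrow by auto
  obtain k where k: "V i k \<noteq> -\<infinity>" and kk: "opT V x i = - V i k + (SUP j\<in>{j. j \<noteq> i}. V j k + x j)"
    using INF_attained[OF _ ne, of "\<lambda>k. - V i k + (SUP j\<in>{j. j \<noteq> i}. V j k + x j)"]
    unfolding opT_def by auto
  obtain v where v: "V i k = ereal v" using k hV by (cases "V i k") auto
  have s: "(SUP j\<in>{j. j \<noteq> i}. V j k + x j) = -\<infinity>" using h kk v by simp
  show "i \<notin> Fs V {j. x j \<noteq> -\<infinity>}"
  proof
    assume "i \<in> Fs V {j. x j \<noteq> -\<infinity>}"
    then obtain j where j: "j \<noteq> i" "x j \<noteq> -\<infinity>" "V j k \<noteq> -\<infinity>" using k unfolding Fs_def by auto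
    have "V j k + x j \<le> (SUP j\<in>{j. j \<noteq> i}. V j k + x j)" using j by (auto intro: SUP_upper)
    moreover have "V j k + x j \<noteq> -\<infinity>" using j hV x unfolding rmax_vec_def
      by (cases "V j k"; cases "x j") auto
    ultimately show False using s by simp
  qed
next
  assume h: "i \<notin> Fs V {j. x j \<noteq> -\<infinity>}"
  then obtain k where k: "V i k \<noteq> -\<infinity>" and kj: "\<forall>j. j \<noteq> i \<longrightarrow> x j = -\<infinity> \<or> V j k = -\<infinity>"
    unfolding Fs_def by auto
  obtain v where v: "V i k = ereal v" using k hV by (cases "V i k") auto
  have "(SUP j\<in>{j. j \<noteq> i}. V j k + x j) = -\<infinity>"
  proof -
    have "(SUP j\<in>{j. j \<noteq> i}. V j k + x j) \<le> -\<infinity>"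
    proof (rule SUP_least)
      fix j assume "j \<in> {j. j \<noteq> i}"
      then have "x j = -\<infinity> \<or> V j k = -\<infinity>" using kj by auto
      then show "V j k + x j \<le> -\<infinity>" using hV x unfolding rmax_vec_def by auto
    qed
    then show ?thesis by simp
  qed
  then have e: "- V i k + (SUP j\<in>{j. j \<noteq> i}. V j k + x j) = -\<infinity>" using v by simp
  have "opT V x i \<le> - V i k + (SUP j\<in>{j. j \<noteq> i}. V j k + x j)"
    unfolding opT_def using k by (auto intro: INF_lower)
  then have "opT V x i \<le> -\<infinity>" using e by simp
  then show "opT V x i = -\<infinity>" by simp
qed

lemma iter_support:
  fixes V :: "'n::finite \<Rightarrow> 'p::finite \<Rightarrow> ereal"
  assumes hV: "\<forall>i k. V i k \<noteq> \<infinity>" and hrow: "\<forall>i. \<exists>k. V i k \<noteq> -\<infinity>"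
  shows "rmax_vec ((opT V ^^ m) (\<lambda>_. 0)) \<and> {j. (opT V ^^ m) (\<lambda>_. 0) j \<noteq> -\<infinity>} = (Fs V ^^ m) UNIV"
proof (induction m)
  case 0
  then show ?case by (simp add: rmax_vec_def)
next
  case (Suc m)
  then show ?case using opT_rmax[OF hV hrow] opT_minf_iff[OF hV hrow] by auto
qed

lemma part_nonempty: "part I \<noteq> {}"
proof -
  have "(\<lambda>i. if i \<in> I then 0 else -\<infinity>) \<in> part I" unfolding part_def rmax_vec_def by auto
  then show ?thesis by auto
qed

lemma part_inv_iff:
  fixes V :: "'n::finite \<Rightarrow> 'p::finite \<Rightarrow> ereal"
  assumes hV: "\<forall>i k. V i k \<noteq> \<infinity>" and hrow: "\<forall>i. \<exists>k. V i k \<noteq> -\<infinity>"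
  shows "opT V ` part I \<subseteq> part I \<longleftrightarrow> Fs V I = I"
proof -
  have sup: "{i. opT V x i \<noteq> -\<infinity>} = Fs V I" if "x \<in> part I" for x
    using that opT_minf_iff[OF hV hrow] unfolding part_def by auto
  have rm: "rmax_vec (opT V x)" if "x \<in> part I" for x
    using that opT_rmax[OF hV hrow] unfolding part_def by auto
  obtain x0 where x0: "x0 \<in> part I" using part_nonempty by blast
  show ?thesis
  proof
    assume "opT V ` part I \<subseteq> part I"
    then have "opT V x0 \<in> part I" using x0 by auto
    then show "Fs V I = I" using sup[OF x0] unfolding part_def by auto
  next
    assume "Fs V I = I"
    then show "opT V ` part I \<subseteq> part I" using sup rm unfolding part_def by auto
  qed
qed

lemma Fs_iter_dec: "(Fs V ^^ Suc m) UNIV \<subseteq> (Fs V ^^ m) UNIV"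
proof (induction m)
  case 0 then show ?case by simp
next
  case (Suc m)
  then show ?case using Fs_mono by (metis funpow.simps(2) o_apply)
qed

lemma Fs_iter_anti: "m \<le> m' \<Longrightarrow> (Fs V ^^ m') UNIV \<subseteq> (Fs V ^^ m) UNIV"
proof (induction m' rule: dec_induct)
  case base then show ?case by simp
next
  case (step m') then show ?case using Fs_iter_dec[where V=V and m=m'] by blast
qed

lemma fixpoint_iff:
  fixes V :: "'n::finite \<Rightarrow> 'p \<Rightarrow> ereal"
  shows "(\<exists>I. I \<noteq> {} \<and> Fs V I = I) \<longleftrightarrow> (Fs V ^^ CARD('n)) UNIV \<noteq> {}"
proof
  assume "\<exists>I. I \<noteq> {} \<and> Fs V I = I"
  then obtain I where I: "I \<noteq> {}" "Fs V I = I" by auto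
  have "I \<subseteq> (Fs V ^^ m) UNIV" for m
  proof (induction m)
    case 0 then show ?case by simp
  next
    case (Suc m) then show ?case using Fs_mono[OF Suc] I(2) by auto
  qed
  then show "(Fs V ^^ CARD('n)) UNIV \<noteq> {}" using I(1) by blast
next
  assume ne: "(Fs V ^^ CARD('n)) UNIV \<noteq> {}"
  show "\<exists>I. I \<noteq> {} \<and> Fs V I = I"
  proof (rule ccontr)
    assume nofix: "\<not> (\<exists>I. I \<noteq> {} \<and> Fs V I = I)"
    have "(Fs V ^^ m) UNIV \<noteq> {} \<Longrightarrow> card ((Fs V ^^ m) UNIV) + m \<le> CARD('n)" for m
    proof (induction m)
      case 0 then show ?case by simp
    next
      case (Suc m)
      have sub: "(Fs V ^^ Suc m) UNIV \<subseteq> (Fs V ^^ m) UNIV" by (rule Fs_iter_dec)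
      then have nem: "(Fs V ^^ m) UNIV \<noteq> {}" using Suc.prems by auto
      have "(Fs V ^^ Suc m) UNIV \<noteq> (Fs V ^^ m) UNIV" using nofix nem by auto
      then have "(Fs V ^^ Suc m) UNIV \<subset> (Fs V ^^ m) UNIV" using sub by auto
      then have "card ((Fs V ^^ Suc m) UNIV) < card ((Fs V ^^ m) UNIV)"
        by (intro psubset_card_mono) auto
      then show ?case using Suc.IH[OF nem] by simp
    qed
    from this[OF ne] have "card ((Fs V ^^ CARD('n)) UNIV) = 0" by simp
    then show False using ne by simp
  qed
qed

definition bnd :: "('n::finite \<Rightarrow> 'p::finite \<Rightarrow> ereal) \<Rightarrow> real" where
  "bnd V = Max (range (\<lambda>(i,k). \<bar>real_of_ereal (V i k)\<bar>))"

lemma bnd_ge: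
  fixes V :: "'n::finite \<Rightarrow> 'p::finite \<Rightarrow> ereal" and i k v
  assumes "V i k = ereal v" shows "\<bar>v\<bar> \<le> bnd V"
proof -
  note assms
  then have "\<bar>v\<bar> = (\<lambda>(i,k). \<bar>real_of_ereal (V i k)\<bar>) (i,k)" by simp
  also have "\<dots> \<le> bnd V" unfolding bnd_def by (intro Max_ge) auto
  finally show ?thesis .
qed

lemma bnd_nonneg: "0 \<le> bnd V"
proof -
  have "\<bar>real_of_ereal (V i k)\<bar> \<le> bnd V" for i k
    unfolding bnd_def by (rule Max_ge) (auto intro!: image_eqI[where x="(i,k)"])
  then show ?thesis by (meson abs_ge_zero order_trans)
qed

lemma lower_bound:
  fixes V :: "'n::finite \<Rightarrow> 'p::finite \<Rightarrow> ereal"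
  assumes hV: "\<forall>i k. V i k \<noteq> \<infinity>"
    and S: "S \<subseteq> Fs V S" and i: "i \<in> S" and xm: "\<forall>j\<in>S. ereal m \<le> x j"
  shows "ereal (m - 2 * bnd V) \<le> opT V x i"
  unfolding opT_def
proof (rule INF_greatest)
  fix k assume k: "k \<in> {k. V i k \<noteq> -\<infinity>}"
  then obtain j where j: "j \<noteq> i" "j \<in> S" "V j k \<noteq> -\<infinity>" using S i unfolding Fs_def by blast
  obtain v where v: "V i k = ereal v" using k hV by (cases "V i k") auto
  obtain w where w: "V j k = ereal w" using j hV by (cases "V j k") auto
  have "ereal w + ereal m \<le> ereal w + x j" using xm j by (intro add_left_mono) auto
  then have "ereal (w + m) \<le> V j k + x j" using w by simp
  also have "\<dots> \<le> (SUP j\<in>{j. j \<noteq> i}. V j k + x j)" using j by (auto intro: SUP_upper)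
  finally have "ereal (-v) + ereal (w + m) \<le> ereal (-v) + (SUP j\<in>{j. j \<noteq> i}. V j k + x j)"
    by (rule add_left_mono)
  moreover have "m - 2 * bnd V \<le> -v + (w + m)" using bnd_ge[of V i k v, OF v] bnd_ge[of V j k w, OF w] by linarith
  ultimately show "ereal (m - 2 * bnd V) \<le> - V i k + (SUP j\<in>{j. j \<noteq> i}. V j k + x j)"
    using v by (metis ereal_less_eq(3) order_trans plus_ereal.simps(1) uminus_ereal.simps(1))
qed

lemma level_vector:
  fixes V :: "'n::finite \<Rightarrow> 'p::finite \<Rightarrow> ereal"
  assumes hV: "\<forall>i k. V i k \<noteq> \<infinity>"
    and empty: "(Fs V ^^ CARD('n)) UNIV = {}" and r: "0 \<le> r"
  shows "\<exists>z::'n \<Rightarrow> real. \<forall>i. opT V (\<lambda>j. ereal (z j)) i \<le> ereal (z i - r)"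
proof -
  define A where "A m = (Fs V ^^ m) UNIV" for m
  define lev where "lev i = (LEAST m. i \<notin> A (Suc m))" for i
  have ex: "i \<notin> A (Suc CARD('n))" for i
    using Fs_iter_dec[where V=V and m="CARD('n)"] empty unfolding A_def by auto
  have L1: "i \<notin> A (Suc (lev i))" for i unfolding lev_def by (rule LeastI[of "\<lambda>m. i \<notin> A (Suc m)", OF ex])
  have L2: "i \<in> A (lev i)" for i
  proof (cases "lev i")
    case 0 then show ?thesis unfolding A_def by simp
  next
    case (Suc q)
    then have "q < lev i" by simp
    then have "\<not> i \<notin> A (Suc q)" unfolding lev_def by (rule not_less_Least)
    then show ?thesis using Suc by simp
  qed
  have L3: "lev j < lev i" if "j \<notin> A (lev i)" for i j
  proof (rule ccontr)
    assume "\<not> lev j < lev i"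
    then have "A (lev j) \<subseteq> A (lev i)" unfolding A_def by (intro Fs_iter_anti) simp
    then show False using L2[of j] that by auto
  qed
  define R where "R = r + 2 * bnd V"
  define z where "z j = R * real (lev j)" for j
  have "opT V (\<lambda>j. ereal (z j)) i \<le> ereal (z i - r)" for i
  proof -
    have "i \<notin> Fs V (A (lev i))" using L1[of i] unfolding A_def by simp
    then obtain k where k: "V i k \<noteq> -\<infinity>" and kj: "\<forall>j. j \<noteq> i \<and> j \<in> A (lev i) \<longrightarrow> V j k = -\<infinity>"
      unfolding Fs_def by blast
    obtain v where v: "V i k = ereal v" using k hV by (cases "V i k") auto
    have "(SUP j\<in>{j. j \<noteq> i}. V j k + ereal (z j)) \<le> ereal (bnd V + R * real (lev i) - R)"
    proof (rule SUP_least)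
      fix j assume j: "j \<in> {j. j \<noteq> i}"
      show "V j k + ereal (z j) \<le> ereal (bnd V + R * real (lev i) - R)"
      proof (cases "V j k = -\<infinity>")
        case True then show ?thesis by simp
      next
        case False
        obtain w where w: "V j k = ereal w" using False hV by (cases "V j k") auto
        have "j \<notin> A (lev i)" using kj j False by auto
        then have "lev j < lev i" by (rule L3)
        then have "real (lev j) \<le> real (lev i) - 1" by linarith
        moreover have "0 \<le> R" using bnd_nonneg[of V] r unfolding R_def by simp
        ultimately have "R * real (lev j) \<le> R * (real (lev i) - 1)" by (intro mult_left_mono)
        then show ?thesis using w bnd_ge[of V j k w, OF w] unfolding z_def by (simp add: algebra_simps)
      qed
    qed
    then have "- V i k + (SUP j\<in>{j. j \<noteq> i}. V j k + ereal (z j)) \<le> ereal (-v) + ereal (bnd V + R * real (lev i) - R)"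
      unfolding v uminus_ereal.simps by (rule add_left_mono)
    also have "\<dots> \<le> ereal (z i - r)" using bnd_ge[of V i k v, OF v] unfolding z_def R_def by (simp add: algebra_simps)
    finally have t: "- V i k + (SUP j\<in>{j. j \<noteq> i}. V j k + ereal (z j)) \<le> ereal (z i - r)" .
    have "opT V (\<lambda>j. ereal (z j)) i \<le> - V i k + (SUP j\<in>{j. j \<noteq> i}. V j k + ereal (z j))"
      unfolding opT_def using k by (auto intro: INF_lower)
    then show ?thesis using t by simp
  qed
  then show ?thesis by blast
qed



lemma ball_in_col:
  fixes V :: "'n::finite \<Rightarrow> 'p::finite \<Rightarrow> ereal"
  assumes hV: "\<forall>i k. V i k \<noteq> \<infinity>" and hcol: "\<forall>k. \<exists>i. V i k \<noteq> -\<infinity>"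
    and hT: "\<forall>i. opT V (\<lambda>j. ereal (- a j)) i \<le> ereal (- a i - r)"
  shows "hball a r \<subseteq> col V"
proof
  fix y assume "y \<in> hball a r"
  then have rm: "rmax_vec y" and hd: "hilbert_d (\<lambda>i. ereal (a i)) y \<le> ereal r"
    unfolding hball_def by auto
  define St where "St = {ereal (l - m) | l m. \<forall>i. ereal m + y i \<le> ereal (a i) \<and> ereal (a i) \<le> ereal l + y i}"
  have hdS: "hilbert_d (\<lambda>i. ereal (a i)) y = Inf St" unfolding hilbert_d_def St_def by simp
  have fin: "y i \<noteq> -\<infinity>" for i
  proof
    assume yi: "y i = -\<infinity>"
    have "e \<notin> St" for e
    proof
      assume "e \<in> St"
      then obtain l where "ereal (a i) \<le> ereal l + y i" unfolding St_def by blast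
      then show False using yi by simp
    qed
    then have "St = {}" by blast
    then show False using hd hdS by (simp add: top_ereal_def)
  qed
  define Y where "Y i = real_of_ereal (y i)" for i
  have yY: "y i = ereal (Y i)" for i using fin[of i] rm unfolding Y_def rmax_vec_def
    by (cases "y i") auto
  have spread: "(a i - Y i) - (a j - Y j) \<le> r" for i j
  proof (rule ccontr)
    assume c: "\<not> (a i - Y i) - (a j - Y j) \<le> r"
    have "ereal ((a i - Y i) - (a j - Y j)) \<le> Inf St"
    proof (rule Inf_greatest)
      fix e assume "e \<in> St"
      then obtain l m where e: "e = ereal (l - m)" and
        lm: "\<forall>i. ereal m + y i \<le> ereal (a i) \<and> ereal (a i) \<le> ereal l + y i"
        unfolding St_def by blast
      have "m + Y j \<le> a j" "a i \<le> l + Y i" using lm yY by (metis ereal_less_eq(3) plus_ereal.simps(1))+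
      then show "ereal ((a i - Y i) - (a j - Y j)) \<le> e" unfolding e by simp
    qed
    moreover have "Inf St \<le> ereal r" using hd hdS by simp
    ultimately have "ereal ((a i - Y i) - (a j - Y j)) \<le> ereal r" by (rule order_trans)
    then show False using c by simp
  qed
  define x where "x k = (INF j. y j - V j k)" for k
  have xfin: "x k \<noteq> \<infinity>" for k
  proof -
    obtain j0 where j0: "V j0 k \<noteq> -\<infinity>" using hcol by auto
    obtain w where w: "V j0 k = ereal w" using j0 hV by (cases "V j0 k") auto
    have "x k \<le> y j0 - V j0 k" unfolding x_def by (rule INF_lower) simp
    then show ?thesis using w yY[of j0] by auto
  qed
  have "y i = (SUP k. V i k + x k)" for i
  proof (rule antisym)
    show "(SUP k. V i k + x k) \<le> y i"
    proof (rule SUP_least)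
      fix k
      show "V i k + x k \<le> y i"
      proof (cases "V i k = -\<infinity>")
        case True then show ?thesis using xfin[of k] by (cases "x k") simp_all
      next
        case False
        then obtain v where v: "V i k = ereal v" using hV by (cases "V i k") auto
        have "x k \<le> y i - V i k" unfolding x_def by (rule INF_lower) simp
        then have "x k \<le> ereal (Y i - v)" using v yY[of i] by simp
        then have "ereal v + x k \<le> ereal v + ereal (Y i - v)" by (rule add_left_mono)
        then show ?thesis using v yY[of i] by simp
      qed
    qed
  next
    have ne: "{k. V i k \<noteq> -\<infinity>} \<noteq> {}"
    proof
      assume "{k. V i k \<noteq> -\<infinity>} = {}"
      then have "opT V (\<lambda>j. ereal (- a j)) i = \<infinity>" unfolding opT_def by (simp add: top_ereal_def)
      moreover have "opT V (\<lambda>j. ereal (- a j)) i \<le> ereal (- a i - r)" using hT by blast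
      ultimately show False by simp
    qed
    obtain k where k: "V i k \<noteq> -\<infinity>" and kk: "opT V (\<lambda>j. ereal (- a j)) i = - V i k + (SUP j\<in>{j. j \<noteq> i}. V j k + ereal (- a j))"
      using INF_attained[OF _ ne, of "\<lambda>k. - V i k + (SUP j\<in>{j. j \<noteq> i}. V j k + ereal (- a j))"]
      unfolding opT_def by auto
    obtain v where v: "V i k = ereal v" using k hV by (cases "V i k") auto
    have ineq: "w - v \<le> a j - a i - r" if "j \<noteq> i" "V j k = ereal w" for j w
    proof -
      have "V j k + ereal (- a j) \<le> (SUP j\<in>{j. j \<noteq> i}. V j k + ereal (- a j))"
        by (rule SUP_upper) (use that in simp)
      then have "ereal w + ereal (- a j) \<le> (SUP j\<in>{j. j \<noteq> i}. V j k + ereal (- a j))"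
        unfolding that(2) .
      then have "ereal (-v) + (ereal w + ereal (- a j)) \<le> ereal (-v) + (SUP j\<in>{j. j \<noteq> i}. V j k + ereal (- a j))"
        by (rule add_left_mono)
      also have "\<dots> \<le> ereal (- a i - r)"
      proof -
        have "opT V (\<lambda>j. ereal (- a j)) i \<le> ereal (- a i - r)" using hT by blast
        then have "- V i k + (SUP j\<in>{j. j \<noteq> i}. V j k + ereal (- a j)) \<le> ereal (- a i - r)"
          unfolding kk .
        then show ?thesis unfolding v uminus_ereal.simps .
      qed
      finally have "ereal (-v + (w + - a j)) \<le> ereal (- a i - r)" by (simp only: plus_ereal.simps)
      then have "-v + (w + - a j) \<le> - a i - r" by (simp only: ereal_less_eq(3))
      then show ?thesis by linarith
    qed
    have "ereal (Y i - v) \<le> x k" unfolding x_def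
    proof (rule INF_greatest)
      fix j
      show "ereal (Y i - v) \<le> y j - V j k"
      proof (cases "V j k = -\<infinity>")
        case True then show ?thesis using yY[of j] by simp
      next
        case False
        then obtain w where w: "V j k = ereal w" using hV by (cases "V j k") auto
        show ?thesis
        proof (cases "j = i")
          case True then show ?thesis unfolding True v yY[of i] by simp
        next
          case False
          have "w - v \<le> a j - a i - r" using ineq[OF False w] .
          moreover have "(a j - Y j) - (a i - Y i) \<le> r" by (rule spread)
          ultimately have "Y i - v \<le> Y j - w" by linarith
          then show ?thesis unfolding w yY[of j] by simp
        qed
      qed
    qed
    then have "ereal v + ereal (Y i - v) \<le> V i k + x k" unfolding v by (rule add_left_mono)
    also have "\<dots> \<le> (SUP k. V i k + x k)" by (rule SUP_upper) simp
    finally show "y i \<le> (SUP k. V i k + x k)" using yY[of i] by simp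
  qed
  moreover have "rmax_vec x" using xfin unfolding rmax_vec_def by blast
  ultimately show "y \<in> col V" unfolding col_def by blast
qed


lemma ball_T:
  fixes V :: "'n::finite \<Rightarrow> 'p::finite \<Rightarrow> ereal"
  assumes hV: "\<forall>i k. V i k \<noteq> \<infinity>" and r: "0 \<le> r" and sub: "hball a r \<subseteq> col V"
  shows "opT V (\<lambda>j. ereal (- a j)) i \<le> ereal (- a i - r)"
proof -
  define y where "y j = ereal (a j + (if j = i then r else 0))" for j
  have "hilbert_d (\<lambda>i. ereal (a i)) y \<le> ereal (0 - (- r))"
    unfolding hilbert_d_def
  proof (rule Inf_lower, intro CollectI exI conjI)
    show "ereal (0 - (- r)) = ereal (0 - (- r))" by simp
    show "\<forall>j. ereal (- r) + y j \<le> ereal (a j) \<and> ereal (a j) \<le> ereal 0 + y j"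
      using r unfolding y_def by auto
  qed
  then have "y \<in> hball a r" unfolding hball_def rmax_vec_def y_def by simp
  then have "y \<in> col V" using sub by blast
  then obtain x where x: "rmax_vec x" and yx: "y = (\<lambda>j. SUP k. V j k + x k)"
    unfolding col_def by blast
  obtain k where k: "(SUP k. V i k + x k) = V i k + x k"
    using SUP_attained[of "UNIV::'p set" "\<lambda>k. V i k + x k"] by auto
  have yi: "y i = ereal (a i + r)" unfolding y_def by simp
  have s: "V i k + x k = ereal (a i + r)" using k yx yi by metis
  have "V i k \<noteq> -\<infinity>"
  proof
    assume "V i k = -\<infinity>"
    with s x show False unfolding rmax_vec_def by (cases "x k") auto
  qed
  then obtain v where v: "V i k = ereal v" using hV by (cases "V i k") auto
  have "x k \<noteq> -\<infinity>" using s v by auto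
  then obtain \<xi> where xi: "x k = ereal \<xi>" using x unfolding rmax_vec_def by (cases "x k") auto
  have vxi: "v + \<xi> = a i + r" using s v xi by simp
  have "(SUP j\<in>{j. j \<noteq> i}. V j k + ereal (- a j)) \<le> ereal (- \<xi>)"
  proof (rule SUP_least)
    fix j assume j: "j \<in> {j. j \<noteq> i}"
    show "V j k + ereal (- a j) \<le> ereal (- \<xi>)"
    proof (cases "V j k = -\<infinity>")
      case True then show ?thesis by simp
    next
      case False
      then obtain w where w: "V j k = ereal w" using hV by (cases "V j k") auto
      have "V j k + x k \<le> (SUP k. V j k + x k)" by (rule SUP_upper) simp
      also have "\<dots> = y j" using yx by metis
      also have "\<dots> = ereal (a j)" using j unfolding y_def by simp
      finally have "w + \<xi> \<le> a j" unfolding w xi by simp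
      then show ?thesis unfolding w by simp
    qed
  qed
  then have "ereal (-v) + (SUP j\<in>{j. j \<noteq> i}. V j k + ereal (- a j)) \<le> ereal (-v) + ereal (- \<xi>)"
    by (rule add_left_mono)
  also have "\<dots> = ereal (- a i - r)" using vxi by simp
  finally have t: "- V i k + (SUP j\<in>{j. j \<noteq> i}. V j k + ereal (- a j)) \<le> ereal (- a i - r)"
    unfolding v by simp
  have "opT V (\<lambda>j. ereal (- a j)) i \<le> - V i k + (SUP j\<in>{j. j \<noteq> i}. V j k + ereal (- a j))"
    unfolding opT_def by (rule INF_lower) (use v in simp)
  then show ?thesis using t by (rule order_trans)
qed


lemma noinv_iff:
  fixes V :: "'n::finite \<Rightarrow> 'p::finite \<Rightarrow> ereal"
  assumes hV: "\<forall>i k. V i k \<noteq> \<infinity>" and hrow: "\<forall>i. \<exists>k. V i k \<noteq> -\<infinity>"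
  shows "(\<exists>I. I \<noteq> {} \<and> opT V ` part I \<subseteq> part I) \<longleftrightarrow> (\<exists>I. I \<noteq> {} \<and> Fs V I = I)"
proof -
  have "\<And>I. opT V ` part I \<subseteq> part I \<longleftrightarrow> Fs V I = I" by (rule part_inv_iff[OF hV hrow])
  then show ?thesis by simp
qed

lemma part1:
  fixes V :: "'n::finite \<Rightarrow> 'p::finite \<Rightarrow> ereal"
  assumes hV: "\<forall>i k. V i k \<noteq> \<infinity>" and hrow: "\<forall>i. \<exists>k. V i k \<noteq> -\<infinity>"
    and hcol: "\<forall>k. \<exists>i. V i k \<noteq> -\<infinity>"
  shows "inner_radius V = \<infinity> \<longleftrightarrow> \<not> (\<exists>I. I \<noteq> {} \<and> Fs V I = I)"
proof
  assume top: "inner_radius V = \<infinity>"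
  have "ereal (2 * bnd V) < inner_radius V" using top by simp
  then obtain e where e: "e \<in> {ereal r | r a. 0 \<le> r \<and> hball a r \<subseteq> col V}" and lt: "ereal (2 * bnd V) < e"
    unfolding inner_radius_def less_Sup_iff by (elim bexE) (rule that)
  from e obtain r a where r: "0 \<le> r" and sub: "hball a r \<subseteq> col V" and er: "e = ereal r"
    by (auto simp only: mem_Collect_eq)
  have r2: "2 * bnd V < r" using lt er by simp
  show "\<not> (\<exists>I. I \<noteq> {} \<and> Fs V I = I)"
  proof
    assume "\<exists>I. I \<noteq> {} \<and> Fs V I = I"
    then obtain I where I: "I \<noteq> {}" "Fs V I = I" by blast
    define m where "m = Min ((\<lambda>j. - a j) ` I)"
    have "m \<in> (\<lambda>j. - a j) ` I" unfolding m_def using I(1) by (intro Min_in) auto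
    then obtain i0 where i0: "i0 \<in> I" "m = - a i0" by blast
    have "\<forall>j\<in>I. ereal m \<le> ereal (- a j)" unfolding m_def by auto
    moreover have "I \<subseteq> Fs V I" using I(2) by simp
    ultimately have "ereal (m - 2 * bnd V) \<le> opT V (\<lambda>j. ereal (- a j)) i0"
      by (intro lower_bound[OF hV _ i0(1)])
    also have "\<dots> \<le> ereal (- a i0 - r)" by (rule ball_T[OF hV r sub])
    finally have "m - 2 * bnd V \<le> - a i0 - r" by (simp only: ereal_less_eq(3))
    then show False using i0(2) r2 by linarith
  qed
next
  assume "\<not> (\<exists>I. I \<noteq> {} \<and> Fs V I = I)"
  then have empty: "(Fs V ^^ CARD('n)) UNIV = {}" using fixpoint_iff[of V] by blast
  have mem: "ereal r \<le> inner_radius V" if r: "0 \<le> r" for r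
  proof -
    obtain z :: "'n \<Rightarrow> real" where z: "\<forall>i. opT V (\<lambda>j. ereal (z j)) i \<le> ereal (z i - r)"
      using level_vector[OF hV empty r] by blast
    define a where "a j = - z j" for j
    have "(\<lambda>j. ereal (- a j)) = (\<lambda>j. ereal (z j))" unfolding a_def by simp
    then have "\<forall>i. opT V (\<lambda>j. ereal (- a j)) i \<le> ereal (- a i - r)" using z unfolding a_def by simp
    then have "hball a r \<subseteq> col V" by (rule ball_in_col[OF hV hcol])
    then have "ereal r \<in> {ereal r | r a. 0 \<le> r \<and> hball a r \<subseteq> col V}" using r by blast
    then show ?thesis unfolding inner_radius_def by (rule Sup_upper)
  qed
  show "inner_radius V = \<infinity>"
  proof (rule ereal_top)
    fix B
    have "ereal B \<le> ereal (max B 0)" by simp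
    also have "\<dots> \<le> inner_radius V" by (rule mem) simp
    finally show "ereal B \<le> inner_radius V" .
  qed
qed



definition Lg :: "real \<Rightarrow> ereal" where
  "Lg t = (if 0 < t then ereal (ln t) else -\<infinity>)"

definition Expo :: "ereal \<Rightarrow> real" where
  "Expo v = (if v = -\<infinity> then 0 else exp (real_of_ereal v))"

lemma Lg_mono: "mono Lg"
proof (rule monoI)
  fix s t :: real assume "s \<le> t"
  then show "Lg s \<le> Lg t" unfolding Lg_def by auto
qed

lemma Lg_mult: "0 \<le> s \<Longrightarrow> 0 \<le> t \<Longrightarrow> Lg (s * t) = Lg s + Lg t"
  unfolding Lg_def by (auto simp: ln_mult zero_less_mult_iff)

lemma Lg_Ex: "v \<noteq> \<infinity> \<Longrightarrow> Lg (Expo v) = v"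
  unfolding Lg_def Expo_def by (cases v) auto

lemma Ex_nonneg: "0 \<le> Expo v"
  unfolding Expo_def by auto

lemma Lg_not_inf: "Lg t \<noteq> \<infinity>"
  unfolding Lg_def by auto

lemma Lg_zero: "Lg 0 = -\<infinity>"
  unfolding Lg_def by auto

lemma Lg_one: "Lg 1 = 0"
  unfolding Lg_def by (simp add: zero_ereal_def)

definition GG :: "('n::finite \<Rightarrow> 'p::finite \<Rightarrow> ereal) \<Rightarrow> 'n \<Rightarrow> 'p \<Rightarrow> real^'n \<Rightarrow> real" where
  "GG V i k y = Expo (- V i k) * Max (range (\<lambda>j. if j \<noteq> i then Expo (V j k) * y $ j else 0))"

definition TT :: "('n::finite \<Rightarrow> 'p::finite \<Rightarrow> ereal) \<Rightarrow> real^'n \<Rightarrow> real^'n" where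
  "TT V y = (\<chi> i. Min ((\<lambda>k. GG V i k y) ` {k. V i k \<noteq> -\<infinity>}))"

lemma SUP_if_minf:
  "(SUP j. if P j then f j else (-\<infinity>::ereal)) = (SUP j\<in>{j. P j}. f j)"
proof (rule antisym)
  show "(SUP j. if P j then f j else (-\<infinity>::ereal)) \<le> (SUP j\<in>{j. P j}. f j)"
    by (rule SUP_least) (auto intro: SUP_upper)
  show "(SUP j\<in>{j. P j}. f j) \<le> (SUP j. if P j then f j else (-\<infinity>::ereal))"
  proof (rule SUP_least)
    fix j assume "j \<in> {j. P j}"
    then have "f j = (if P j then f j else -\<infinity>)" by simp
    also have "\<dots> \<le> (SUP j. if P j then f j else (-\<infinity>::ereal))" by (rule SUP_upper) simp
    finally show "f j \<le> \<dots>" .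
  qed
qed

lemma Max_range_nonneg:
  fixes g :: "'n::finite \<Rightarrow> real"
  assumes "\<forall>j. 0 \<le> g j" shows "0 \<le> Max (range g)"
proof -
  obtain j :: 'n where True by simp
  have "g j \<le> Max (range g)" by (rule Max_ge) auto
  then show ?thesis using assms by (meson order_trans)
qed

lemma GG_nonneg:
  assumes y: "\<forall>j. 0 \<le> y $ j" shows "0 \<le> GG V i k y"
  unfolding GG_def
  by (intro mult_nonneg_nonneg Ex_nonneg Max_range_nonneg) (auto intro: mult_nonneg_nonneg Ex_nonneg simp: y)

lemma translate:
  fixes V :: "'n::finite \<Rightarrow> 'p::finite \<Rightarrow> ereal"
  assumes hV: "\<forall>i k. V i k \<noteq> \<infinity>" and hrow: "\<forall>i. \<exists>k. V i k \<noteq> -\<infinity>"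
    and y: "\<forall>j. 0 \<le> y $ j"
  shows "opT V (\<lambda>j. Lg (y $ j)) i = Lg (TT V y $ i)"
proof -
  have ne: "{k. V i k \<noteq> -\<infinity>} \<noteq> {}" using hrow by auto
  have G: "Lg (GG V i k y) = - V i k + (SUP j\<in>{j. j \<noteq> i}. V j k + Lg (y $ j))"
    if k: "V i k \<noteq> -\<infinity>" for k
  proof -
    define g where "g j = (if j \<noteq> i then Expo (V j k) * y $ j else 0)" for j
    have g0: "\<forall>j. 0 \<le> g j" unfolding g_def using y by (auto intro: mult_nonneg_nonneg Ex_nonneg)
    have M0: "0 \<le> Max (range g)" by (rule Max_range_nonneg) (rule g0)
    have "Lg (GG V i k y) = Lg (Expo (- V i k)) + Lg (Max (range g))"
      unfolding GG_def g_def[symmetric]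
      by (rule Lg_mult[OF Ex_nonneg M0])
    also have "Lg (Expo (- V i k)) = - V i k" using k by (intro Lg_Ex) (cases "V i k", auto)
    also have "Lg (Max (range g)) = Max (Lg ` range g)"
      by (rule mono_Max_commute[OF Lg_mono]) auto
    also have "\<dots> = (SUP j. Lg (g j))" by (subst Max_Sup) (auto simp: image_image)
    also have "\<dots> = (SUP j. if j \<noteq> i then V j k + Lg (y $ j) else -\<infinity>)"
    proof (rule SUP_cong)
      fix j
      show "Lg (g j) = (if j \<noteq> i then V j k + Lg (y $ j) else -\<infinity>)"
      proof (cases "j \<noteq> i")
        case True
        then have "Lg (g j) = Lg (Expo (V j k)) + Lg (y $ j)" unfolding g_def
          using y by (auto intro!: Lg_mult Ex_nonneg)
        also have "Lg (Expo (V j k)) = V j k" using hV by (intro Lg_Ex) auto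
        finally show ?thesis using True by simp
      next
        case False then show ?thesis unfolding g_def by (simp add: Lg_zero)
      qed
    qed simp
    also have "\<dots> = (SUP j\<in>{j. j \<noteq> i}. V j k + Lg (y $ j))" by (rule SUP_if_minf)
    finally show ?thesis .
  qed
  have "Lg (TT V y $ i) = Lg (Min ((\<lambda>k. GG V i k y) ` {k. V i k \<noteq> -\<infinity>}))"
    unfolding TT_def by simp
  also have "\<dots> = Min (Lg ` (\<lambda>k. GG V i k y) ` {k. V i k \<noteq> -\<infinity>})"
    by (rule mono_Min_commute[OF Lg_mono]) (use ne in auto)
  also have "\<dots> = (INF k\<in>{k. V i k \<noteq> -\<infinity>}. Lg (GG V i k y))"
    by (subst Min_Inf) (use ne in \<open>auto simp: image_image\<close>)
  also have "\<dots> = opT V (\<lambda>j. Lg (y $ j)) i"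
    unfolding opT_def by (rule INF_cong) (auto simp: G)
  finally show ?thesis by simp
qed


lemma continuous_on_Max_fin:
  fixes f :: "'a \<Rightarrow> 'b::topological_space \<Rightarrow> real"
  assumes "finite A" "A \<noteq> {}" "\<And>a. a \<in> A \<Longrightarrow> continuous_on S (f a)"
  shows "continuous_on S (\<lambda>x. Max ((\<lambda>a. f a x) ` A))"
  using assms
proof (induction A rule: finite_ne_induct)
  case (singleton a) then show ?case by simp
next
  case (insert a F)
  have "continuous_on S (\<lambda>x. max (f a x) (Max ((\<lambda>a. f a x) ` F)))"
    using insert by (intro continuous_on_max) auto
  moreover have "Max ((\<lambda>a. f a x) ` insert a F) = max (f a x) (Max ((\<lambda>a. f a x) ` F))" for x
    using insert by (simp add: Max_insert)
  ultimately show ?case by simp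
qed

lemma continuous_on_Min_fin:
  fixes f :: "'a \<Rightarrow> 'b::topological_space \<Rightarrow> real"
  assumes "finite A" "A \<noteq> {}" "\<And>a. a \<in> A \<Longrightarrow> continuous_on S (f a)"
  shows "continuous_on S (\<lambda>x. Min ((\<lambda>a. f a x) ` A))"
  using assms
proof (induction A rule: finite_ne_induct)
  case (singleton a) then show ?case by simp
next
  case (insert a F)
  have "continuous_on S (\<lambda>x. min (f a x) (Min ((\<lambda>a. f a x) ` F)))"
    using insert by (intro continuous_on_min) auto
  moreover have "Min ((\<lambda>a. f a x) ` insert a F) = min (f a x) (Min ((\<lambda>a. f a x) ` F))" for x
    using insert by (simp add: Min_insert)
  ultimately show ?case by simp
qed

lemma GG_cont:
  fixes V :: "'n::finite \<Rightarrow> 'p::finite \<Rightarrow> ereal"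
  shows "continuous_on UNIV (GG V i k)"
proof -
  have "continuous_on UNIV (\<lambda>y::real^'n. Max ((\<lambda>j. if j \<noteq> i then Expo (V j k) * y $ j else 0) ` UNIV))"
  proof (rule continuous_on_Max_fin)
    fix j :: 'n
    show "continuous_on UNIV (\<lambda>y::real^'n. if j \<noteq> i then Expo (V j k) * y $ j else 0)"
      by (cases "j = i") (auto intro!: continuous_intros)
  qed auto
  then show ?thesis unfolding GG_def[abs_def] by (intro continuous_intros)
qed

lemma TT_cont:
  fixes V :: "'n::finite \<Rightarrow> 'p::finite \<Rightarrow> ereal"
  assumes hrow: "\<forall>i. \<exists>k. V i k \<noteq> -\<infinity>"
  shows "continuous_on UNIV (TT V)"
  unfolding TT_def[abs_def]
proof (rule continuous_on_vec_lambda)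
  fix i
  show "continuous_on UNIV (\<lambda>y. Min ((\<lambda>k. GG V i k y) ` {k. V i k \<noteq> -\<infinity>}))"
    using hrow by (intro continuous_on_Min_fin GG_cont) auto
qed

lemma TT_nonneg:
  fixes V :: "'n::finite \<Rightarrow> 'p::finite \<Rightarrow> ereal"
  assumes hrow: "\<forall>i. \<exists>k. V i k \<noteq> -\<infinity>" and y: "\<forall>j. 0 \<le> y $ j"
  shows "0 \<le> TT V y $ i"
proof -
  have ne: "{k. V i k \<noteq> -\<infinity>} \<noteq> {}" using hrow by auto
  have "\<forall>k. 0 \<le> GG V i k y" using GG_nonneg[OF y] by blast
  then show ?thesis unfolding TT_def using ne by (simp add: Min_ge_iff)
qed

lemma TT_lower:
  fixes V :: "'n::finite \<Rightarrow> 'p::finite \<Rightarrow> ereal"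
  assumes hV: "\<forall>i k. V i k \<noteq> \<infinity>" and hrow: "\<forall>i. \<exists>k. V i k \<noteq> -\<infinity>"
    and S: "S \<subseteq> Fs V S" and i: "i \<in> S" and y: "\<forall>j. 0 \<le> y $ j"
    and m: "0 \<le> m" "\<forall>j\<in>S. m \<le> y $ j"
  shows "exp (- 2 * bnd V) * m \<le> TT V y $ i"
proof -
  have ne: "{k. V i k \<noteq> -\<infinity>} \<noteq> {}" using hrow by auto
  have "exp (- 2 * bnd V) * m \<le> GG V i k y" if k: "V i k \<noteq> -\<infinity>" for k
  proof -
    obtain j where j: "j \<noteq> i" "j \<in> S" "V j k \<noteq> -\<infinity>" using S i k unfolding Fs_def by blast
    obtain v where v: "V i k = ereal v" using k hV by (cases "V i k") auto
    obtain w where w: "V j k = ereal w" using j hV by (cases "V j k") auto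
    have "exp w * y $ j = (if j \<noteq> i then Expo (V j k) * y $ j else 0)" using j w unfolding Expo_def by simp
    also have "\<dots> \<le> Max (range (\<lambda>j. if j \<noteq> i then Expo (V j k) * y $ j else 0))" by (rule Max_ge) auto
    finally have M: "exp w * y $ j \<le> Max (range (\<lambda>j. if j \<noteq> i then Expo (V j k) * y $ j else 0))" .
    have "exp (- bnd V) \<le> exp w" using bnd_ge[of V j k w, OF w] by simp
    then have "exp (- bnd V) * m \<le> exp w * y $ j" using m j by (intro mult_mono) auto
    also note M
    finally have M': "exp (- bnd V) * m \<le> Max (range (\<lambda>j. if j \<noteq> i then Expo (V j k) * y $ j else 0))" .
    have e1: "exp (- bnd V) \<le> Expo (- V i k)" using bnd_ge[of V i k v, OF v] v unfolding Expo_def by simp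
    have "exp (- bnd V) * (exp (- bnd V) * m) \<le> Expo (- V i k) * Max (range (\<lambda>j. if j \<noteq> i then Expo (V j k) * y $ j else 0))"
      using e1 M' m Ex_nonneg[of "- V i k"] by (intro mult_mono) auto
    moreover have "exp (- 2 * bnd V) * m = exp (- bnd V) * (exp (- bnd V) * m)"
    proof -
      have "exp (- 2 * bnd V) = exp (- bnd V + - bnd V)" by simp
      also have "\<dots> = exp (- bnd V) * exp (- bnd V)" by (rule exp_add)
      finally show ?thesis by simp
    qed
    ultimately show ?thesis unfolding GG_def by linarith
  qed
  then show ?thesis unfolding TT_def using ne by (simp add: Min_ge_iff)
qed


definition MM :: "('n::finite \<Rightarrow> 'p::finite \<Rightarrow> ereal) \<Rightarrow> real^'n \<Rightarrow> real" where
  "MM V y = Max (range (\<lambda>i. TT V y $ i))"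

lemma MM_cont:
  fixes V :: "'n::finite \<Rightarrow> 'p::finite \<Rightarrow> ereal"
  assumes hrow: "\<forall>i. \<exists>k. V i k \<noteq> -\<infinity>"
  shows "continuous_on UNIV (MM V)"
  unfolding MM_def[abs_def]
  by (rule continuous_on_Max_fin) (auto intro!: continuous_on_component TT_cont[OF hrow])

lemma MM_ge: "TT V y $ i \<le> MM V y"
  unfolding MM_def by (rule Max_ge) auto

lemma MM_nonneg:
  fixes V :: "'n::finite \<Rightarrow> 'p::finite \<Rightarrow> ereal"
  assumes hrow: "\<forall>i. \<exists>k. V i k \<noteq> -\<infinity>" and y: "\<forall>j. 0 \<le> y $ j"
  shows "0 \<le> MM V y"
proof -
  obtain i :: 'n where True by simp
  show ?thesis using TT_nonneg[OF hrow y, of i] MM_ge[of V y i] by linarith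
qed

lemma approx_eigen:
  fixes V :: "'n::finite \<Rightarrow> 'p::finite \<Rightarrow> ereal"
  assumes hV: "\<forall>i k. V i k \<noteq> \<infinity>" and hrow: "\<forall>i. \<exists>k. V i k \<noteq> -\<infinity>"
    and S: "S \<subseteq> Fs V S" and Sne: "S \<noteq> {}" and eps: "0 < \<epsilon>"
  shows "\<exists>y \<in> cbox (0::real^'n) 1. (\<forall>i. TT V y $ i + \<epsilon> = (MM V y + \<epsilon>) * y $ i)
            \<and> exp (- 2 * bnd V) \<le> MM V y + \<epsilon>"
proof -
  define D where "D = cbox (0::real^'n) 1"
  have Dpos: "\<forall>j. 0 \<le> y $ j" if "y \<in> D" for y using that unfolding D_def mem_box_cart by simp
  have den: "0 < MM V y + \<epsilon>" if "y \<in> D" for y using MM_nonneg[OF hrow Dpos[OF that]] eps by linarith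
  define f where "f y = (\<chi> i. (TT V y $ i + \<epsilon>) / (MM V y + \<epsilon>))" for y
  have contTT: "continuous_on D (\<lambda>y. TT V y $ i + \<epsilon>)" for i
    by (intro continuous_intros continuous_on_subset[OF TT_cont[OF hrow]]) simp
  have contMM: "continuous_on D (\<lambda>y. MM V y + \<epsilon>)"
    by (intro continuous_intros continuous_on_subset[OF MM_cont[OF hrow]]) simp
  have cont: "continuous_on D f" unfolding f_def
  proof (rule continuous_on_vec_lambda)
    fix i
    show "continuous_on D (\<lambda>y. (TT V y $ i + \<epsilon>) / (MM V y + \<epsilon>))"
      using den by (intro continuous_on_divide contTT contMM) fastforce
  qed
  have fim: "f \<in> D \<rightarrow> D"
  proof
    fix y assume y: "y \<in> D"
    have "0 \<le> (TT V y $ i + \<epsilon>) / (MM V y + \<epsilon>) \<and> (TT V y $ i + \<epsilon>) / (MM V y + \<epsilon>) \<le> 1" for i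
    proof
      show "0 \<le> (TT V y $ i + \<epsilon>) / (MM V y + \<epsilon>)"
        using TT_nonneg[OF hrow Dpos[OF y], of i] den[OF y] eps by simp
      show "(TT V y $ i + \<epsilon>) / (MM V y + \<epsilon>) \<le> 1"
        using MM_ge[of V y i] den[OF y] by simp
    qed
    then show "f y \<in> D" unfolding D_def f_def mem_box_cart by simp
  qed
  have "(0::real^'n) \<in> D" unfolding D_def mem_box_cart by simp
  then have "compact D" "convex D" "D \<noteq> {}" unfolding D_def by auto
  then obtain y where y: "y \<in> D" and fy: "f y = y" using brouwer[OF _ _ _ cont fim] by blast
  have eq: "TT V y $ i + \<epsilon> = (MM V y + \<epsilon>) * y $ i" for i
  proof -
    have "(TT V y $ i + \<epsilon>) / (MM V y + \<epsilon>) = y $ i" using fy unfolding f_def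
      by (metis vec_lambda_beta)
    then show ?thesis using den[OF y] by (simp add: field_simps)
  qed
  define m where "m = Min ((\<lambda>j. y $ j) ` S)"
  have "finite S" by simp
  have "m \<in> (\<lambda>j. y $ j) ` S" unfolding m_def using Sne by (intro Min_in) auto
  then obtain i0 where i0: "i0 \<in> S" "m = y $ i0" by blast
  have mpos: "0 < m"
  proof -
    have "0 < TT V y $ i0 + \<epsilon>" using TT_nonneg[OF hrow Dpos[OF y], of i0] eps by simp
    then have "0 < (MM V y + \<epsilon>) * y $ i0" using eq[of i0] by simp
    then show ?thesis using den[OF y] i0(2) by (simp add: zero_less_mult_iff)
  qed
  have "\<forall>j\<in>S. m \<le> y $ j" unfolding m_def by auto
  then have "exp (- 2 * bnd V) * m \<le> TT V y $ i0"
    using mpos by (intro TT_lower[OF hV hrow S i0(1) Dpos[OF y]]) auto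
  then have "exp (- 2 * bnd V) * m \<le> (MM V y + \<epsilon>) * m" using eq[of i0] i0(2) eps by simp
  then have "exp (- 2 * bnd V) \<le> MM V y + \<epsilon>" using mpos by simp
  then show ?thesis using y eq unfolding D_def by blast
qed


lemma eigen_exists:
  fixes V :: "'n::finite \<Rightarrow> 'p::finite \<Rightarrow> ereal"
  assumes hV: "\<forall>i k. V i k \<noteq> \<infinity>" and hrow: "\<forall>i. \<exists>k. V i k \<noteq> -\<infinity>"
    and S: "S \<subseteq> Fs V S" and Sne: "S \<noteq> {}"
  shows "\<exists>c u. c \<noteq> \<infinity> \<and> c \<noteq> -\<infinity> \<and> rmax_vec u \<and> u \<noteq> (\<lambda>_. -\<infinity>) \<and> opT V u = (\<lambda>i. c + u i)"
proof -
  define e where "e n = inverse (real (Suc n))" for n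
  have "\<forall>n. \<exists>y. y \<in> cbox (0::real^'n) 1 \<and> (\<forall>i. TT V y $ i + e n = (MM V y + e n) * y $ i)
            \<and> exp (- 2 * bnd V) \<le> MM V y + e n"
  proof
    fix n
    have "0 < e n" unfolding e_def by simp
    then show "\<exists>y. y \<in> cbox (0::real^'n) 1 \<and> (\<forall>i. TT V y $ i + e n = (MM V y + e n) * y $ i)
            \<and> exp (- 2 * bnd V) \<le> MM V y + e n"
      using approx_eigen[OF hV hrow S Sne] by blast
  qed
  then obtain Y where Y: "\<And>n. Y n \<in> cbox (0::real^'n) 1"
    and Yeq: "\<And>n i. TT V (Y n) $ i + e n = (MM V (Y n) + e n) * Y n $ i"
    and Ylow: "\<And>n. exp (- 2 * bnd V) \<le> MM V (Y n) + e n"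
    by metis
  have "seq_compact (cbox (0::real^'n) 1)" by (intro compact_imp_seq_compact compact_cbox)
  then obtain l r where l: "l \<in> cbox (0::real^'n) 1" and r: "strict_mono r" and lim: "(Y \<circ> r) \<longlonglongrightarrow> l"
    using seq_compactE[of "cbox (0::real^'n) 1" Y] Y by blast
  have lim': "(\<lambda>n. Y (r n)) \<longlonglongrightarrow> l" using lim by (simp add: o_def)
  have er: "(\<lambda>n. e (r n)) \<longlonglongrightarrow> 0"
    using LIMSEQ_subseq_LIMSEQ[OF LIMSEQ_inverse_real_of_nat r] unfolding e_def by (simp add: o_def)
  have TTl: "(\<lambda>n. TT V (Y (r n))) \<longlonglongrightarrow> TT V l"
  proof (rule isCont_tendsto_compose[OF _ lim'])
    show "isCont (TT V) l" using TT_cont[OF hrow] continuous_on_eq_continuous_at[OF open_UNIV] by blast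
  qed
  have MMl: "(\<lambda>n. MM V (Y (r n))) \<longlonglongrightarrow> MM V l"
  proof (rule isCont_tendsto_compose[OF _ lim'])
    show "isCont (MM V) l" using MM_cont[OF hrow] continuous_on_eq_continuous_at[OF open_UNIV] by blast
  qed
  have lpos: "\<forall>j. 0 \<le> l $ j" using l unfolding mem_box_cart by simp
  have eig: "TT V l $ i = MM V l * l $ i" for i
  proof -
    have a: "(\<lambda>n. TT V (Y (r n)) $ i + e (r n)) \<longlonglongrightarrow> TT V l $ i + 0"
      by (intro tendsto_add tendsto_vec_nth TTl er)
    have b: "(\<lambda>n. (MM V (Y (r n)) + e (r n)) * Y (r n) $ i) \<longlonglongrightarrow> (MM V l + 0) * l $ i"
      by (intro tendsto_mult tendsto_add tendsto_vec_nth MMl er lim')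
    have "(\<lambda>n. TT V (Y (r n)) $ i + e (r n)) = (\<lambda>n. (MM V (Y (r n)) + e (r n)) * Y (r n) $ i)"
      using Yeq by simp
    then show ?thesis using LIMSEQ_unique[OF a] b by simp
  qed
  have "exp (- 2 * bnd V) \<le> MM V l + 0"
  proof (rule LIMSEQ_le_const)
    show "(\<lambda>n. MM V (Y (r n)) + e (r n)) \<longlonglongrightarrow> MM V l + 0" by (intro tendsto_add MMl er)
    show "\<exists>N. \<forall>n\<ge>N. exp (- 2 * bnd V) \<le> MM V (Y (r n)) + e (r n)" using Ylow by blast
  qed
  then have lampos: "0 < MM V l" using exp_gt_zero[of "- 2 * bnd V"] by linarith
  have "MM V l \<in> range (\<lambda>i. TT V l $ i)" unfolding MM_def by (intro Max_in) auto
  then obtain i1 where i1: "MM V l = TT V l $ i1" by blast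
  have li1: "l $ i1 = 1" using eig[of i1] i1 lampos by simp
  define u where "u j = Lg (l $ j)" for j
  define c where "c = ereal (ln (MM V l))"
  have "opT V u = (\<lambda>i. c + u i)"
  proof
    fix i
    have "opT V u i = Lg (TT V l $ i)" unfolding u_def by (rule translate[OF hV hrow lpos])
    also have "\<dots> = Lg (MM V l) + Lg (l $ i)" unfolding eig
      using lampos lpos by (intro Lg_mult) auto
    also have "\<dots> = c + u i" unfolding c_def u_def Lg_def using lampos by simp
    finally show "opT V u i = c + u i" .
  qed
  moreover have "rmax_vec u" unfolding rmax_vec_def u_def using Lg_not_inf by blast
  moreover have "u \<noteq> (\<lambda>_. -\<infinity>)"
  proof
    assume "u = (\<lambda>_. -\<infinity>)"
    then have "u i1 = -\<infinity>" by simp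
    then show False unfolding u_def li1 Lg_one by simp
  qed
  moreover have "c \<noteq> \<infinity>" "c \<noteq> -\<infinity>" unfolding c_def by simp_all
  ultimately show ?thesis by blast
qed



theorem corollary3p7:
  fixes V :: "'n::finite \<Rightarrow> 'p::finite \<Rightarrow> ereal"
  assumes "\<forall>i k. V i k \<noteq> \<infinity>"
    and "\<forall>i. \<exists>k. V i k \<noteq> -\<infinity>"
    and "\<forall>k. \<exists>i. V i k \<noteq> -\<infinity>"
  shows "(inner_radius V = \<infinity> \<longleftrightarrow> \<not> (\<exists>I. I \<noteq> {} \<and> opT V ` part I \<subseteq> part I))
       \<and> (\<not> (\<exists>I. I \<noteq> {} \<and> opT V ` part I \<subseteq> part I)
            \<longleftrightarrow> (opT V ^^ CARD('n)) (\<lambda>_. 0) = (\<lambda>_. -\<infinity>))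
       \<and> ((opT V ^^ CARD('n)) (\<lambda>_. 0) = (\<lambda>_. -\<infinity>) \<longleftrightarrow> rho (opT V) = -\<infinity>)"
proof -
  note hV = assms(1) and hrow = assms(2) and hcol = assms(3)
  have ni: "(\<exists>I. I \<noteq> {} \<and> opT V ` part I \<subseteq> part I) \<longleftrightarrow> (\<exists>I. I \<noteq> {} \<and> Fs V I = I)"
    by (rule noinv_iff[OF hV hrow])
  have fp: "(\<exists>I. I \<noteq> {} \<and> Fs V I = I) \<longleftrightarrow> (Fs V ^^ CARD('n)) UNIV \<noteq> {}"
    by (rule fixpoint_iff)
  define f where "f = (opT V ^^ CARD('n)) (\<lambda>_. 0)"
  have supp: "{j. f j \<noteq> -\<infinity>} = (Fs V ^^ CARD('n)) UNIV"
    unfolding f_def using iter_support[OF hV hrow] by blast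
  have "f = (\<lambda>_. -\<infinity>) \<longleftrightarrow> {j. f j \<noteq> -\<infinity>} = {}" by (auto simp: fun_eq_iff)
  then have it: "f = (\<lambda>_. -\<infinity>) \<longleftrightarrow> (Fs V ^^ CARD('n)) UNIV = {}" using supp by simp
  have P1: "inner_radius V = \<infinity> \<longleftrightarrow> \<not> (\<exists>I. I \<noteq> {} \<and> opT V ` part I \<subseteq> part I)"
    using part1[OF hV hrow hcol] ni by simp
  have P2: "\<not> (\<exists>I. I \<noteq> {} \<and> opT V ` part I \<subseteq> part I) \<longleftrightarrow> f = (\<lambda>_. -\<infinity>)"
    using ni fp it by simp
  have P3: "f = (\<lambda>_. -\<infinity>) \<longleftrightarrow> rho (opT V) = -\<infinity>"
  proof
    assume "f = (\<lambda>_. -\<infinity>)"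
    then have nofix: "\<not> (\<exists>I. I \<noteq> {} \<and> Fs V I = I)" using it fp by simp
    show "rho (opT V) = -\<infinity>"
      unfolding rho_def
    proof (rule antisym)
      show "Sup {c. c \<noteq> \<infinity> \<and> (\<exists>u. rmax_vec u \<and> u \<noteq> (\<lambda>_. -\<infinity>) \<and> opT V u = (\<lambda>i. c + u i))} \<le> -\<infinity>"
      proof (rule Sup_least)
        fix c assume "c \<in> {c. c \<noteq> \<infinity> \<and> (\<exists>u. rmax_vec u \<and> u \<noteq> (\<lambda>_. -\<infinity>) \<and> opT V u = (\<lambda>i. c + u i))}"
        then obtain u where c: "c \<noteq> \<infinity>" and u: "rmax_vec u" "u \<noteq> (\<lambda>_. -\<infinity>)" and eq: "opT V u = (\<lambda>i. c + u i)"
          by blast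
        show "c \<le> -\<infinity>"
        proof (rule ccontr)
          assume "\<not> c \<le> -\<infinity>"
          then obtain c' where c': "c = ereal c'" using c by (cases c) auto
          define I where "I = {j. u j \<noteq> -\<infinity>}"
          have "I \<noteq> {}" unfolding I_def using u(2) by (auto simp: fun_eq_iff)
          moreover have "Fs V I = I"
          proof -
            have "i \<in> Fs V I \<longleftrightarrow> i \<in> I" for i
            proof -
              have "i \<in> Fs V I \<longleftrightarrow> opT V u i \<noteq> -\<infinity>" unfolding I_def using opT_minf_iff[OF hV hrow u(1)] by blast
              also have "\<dots> \<longleftrightarrow> c + u i \<noteq> -\<infinity>" using eq by simp
              also have "\<dots> \<longleftrightarrow> i \<in> I" unfolding I_def c' using u(1) unfolding rmax_vec_def by (cases "u i") auto
              finally show ?thesis .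
            qed
            then show ?thesis by blast
          qed
          ultimately show False using nofix by blast
        qed
      qed
    qed simp
  next
    assume rho: "rho (opT V) = -\<infinity>"
    show "f = (\<lambda>_. -\<infinity>)"
    proof (rule ccontr)
      assume "f \<noteq> (\<lambda>_. -\<infinity>)"
      then obtain I where I: "I \<noteq> {}" "Fs V I = I" using it fp by blast
      obtain c u where cu: "c \<noteq> \<infinity>" "c \<noteq> -\<infinity>" "rmax_vec u" "u \<noteq> (\<lambda>_. -\<infinity>)" "opT V u = (\<lambda>i. c + u i)"
        using eigen_exists[OF hV hrow _ I(1)] I(2) by blast
      have "c \<le> rho (opT V)" unfolding rho_def by (rule Sup_upper) (use cu in blast)
      then show False using rho cu(2) by simp
    qed
  qed
  show ?thesis using P1 P2 P3 unfolding f_def by blast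
qed


end
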